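(* Let $\hat{\mathbb{N}}=\{n\in\mathbb{N}: n\ge 3\}$ and let $X,Y \subseteq \hat{\mathbb{N}}$ be non-empty. Then $\bigcap_{n \in X} \mathrm{pPol}\, R^{\Lambda}_n = \bigcap_{m \in Y} \mathrm{pPol}\, R^{\Lambda}_m$ if and only if $X = Y$.
   Context: Partial functions are on $\{0,1\}$: an $n$-ary partial function is a map $f:\operatorname{dom} f\to\{0,1\}$ with $\operatorname{dom} f\subseteq\{0,1\}^n$. For $\rho\subseteq\{0,1\}^h$, $\mathrm{pPol}\,\rho$ is the set of partial functions $f$ such that for every $h\times n$ matrix whose rows lie in $\operatorname{dom} f$ and whose columns lie in $\rho$, the column obtained by applying $f$ row-wise lies in $\rho$. For $m\ge3$, $R^{\Lambda}_m\subseteq\{0,1\}^{m+1}$ is the set of tuples $(x_1,\dots,x_{m+1})$ satisfying $x_1\lor\lnot x_2\lor\cdots\lor\lnot x_{m+1}$ and, for all pairwise distinct $i,j_1,j_2\in\{2,\dots,m+1\}$, $x_i\lor\lnot x_1\lor\lnot x_{j_1}\lor\lnot x_{j_2}$. *)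

theory Defs
  imports Main
begin

text \<open>Tuples over {0,1} are bool lists (False = 0, True = 1).
An n-ary partial function is a pair (n, f) where f :: bool list \<Rightarrow> bool option
is a map whose domain is contained in the set of lists of length n.\<close>

type_synonym pfun = "nat \<times> (bool list \<Rightarrow> bool option)"

definition is_pfun :: "pfun \<Rightarrow> bool" where
  "is_pfun F \<longleftrightarrow> dom (snd F) \<subseteq> {x. length x = fst F}"

text \<open>A matrix with h rows and n columns is given by its list of columns cs
(length n, each column of length h); row i is map (\<lambda>c. c ! i) cs.\<close>

definition pPol :: "nat \<Rightarrow> bool list set \<Rightarrow> pfun set" where
  "pPol h rho = {F. is_pfun F \<and>
     (\<forall>cs. length cs = fst F \<longrightarrow> (\<forall>c\<in>set cs. c \<in> rho) \<longrightarrow>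
        (\<forall>i<h. map (\<lambda>c. c ! i) cs \<in> dom (snd F)) \<longrightarrow>
        map (\<lambda>i. the (snd F (map (\<lambda>c. c ! i) cs))) [0..<h] \<in> rho)}"

text \<open>R^Lambda_m as a subset of {0,1}^(m+1); x_k is x ! (k-1).\<close>

definition RLam :: "nat \<Rightarrow> bool list set" where
  "RLam m = {x. length x = m + 1 \<and>
     (x ! 0 \<or> (\<exists>k\<in>{2..m+1}. \<not> x ! (k - 1))) \<and>
     (\<forall>i\<in>{2..m+1}. \<forall>j1\<in>{2..m+1}. \<forall>j2\<in>{2..m+1}.
        i \<noteq> j1 \<and> i \<noteq> j2 \<and> j1 \<noteq> j2 \<longrightarrow>
        x ! (i - 1) \<or> \<not> x ! 0 \<or> \<not> x ! (j1 - 1) \<or> \<not> x ! (j2 - 1))}"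

definition pPolRLam :: "nat \<Rightarrow> pfun set" where
  "pPolRLam m = pPol (m + 1) (RLam m)"

end

theory Submission
  imports Defs
begin

lemma RL1: "x \<in> RLam m \<Longrightarrow> \<not> x!0 \<Longrightarrow> \<exists>k\<in>{1..m}. \<not> x!k"
  unfolding RLam_def
  by (auto, metis One_nat_def Suc_eq_plus1 atLeastAtMost_iff diff_Suc_1 le_diff_conv Suc_le_mono numeral_2_eq_2 Suc_le_D)

lemma RL2: "x \<in> RLam m \<Longrightarrow> x!0 \<Longrightarrow> a\<in>{1..m} \<Longrightarrow> b\<in>{1..m} \<Longrightarrow> c\<in>{1..m} \<Longrightarrow>
   a\<noteq>b \<Longrightarrow> a\<noteq>c \<Longrightarrow> b\<noteq>c \<Longrightarrow> x!a \<or> \<not>x!b \<or> \<not>x!c"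
proof -
  assume x: "x \<in> RLam m" "x!0" and r: "a\<in>{1..m}" "b\<in>{1..m}" "c\<in>{1..m}" and d: "a\<noteq>b" "a\<noteq>c" "b\<noteq>c"
  from x have "\<forall>i\<in>{2..m+1}. \<forall>j1\<in>{2..m+1}. \<forall>j2\<in>{2..m+1}.
        i \<noteq> j1 \<and> i \<noteq> j2 \<and> j1 \<noteq> j2 \<longrightarrow>
        x ! (i - 1) \<or> \<not> x ! 0 \<or> \<not> x ! (j1 - 1) \<or> \<not> x ! (j2 - 1)" unfolding RLam_def by blast
  moreover have "a+1 \<in> {2..m+1}" "b+1 \<in> {2..m+1}" "c+1 \<in> {2..m+1}" using r by auto
  ultimately have "x ! (a+1 - 1) \<or> \<not> x ! 0 \<or> \<not> x ! (b+1 - 1) \<or> \<not> x ! (c+1 - 1)"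
    using d by (meson add_right_cancel)
  thus ?thesis using x by simp
qed

lemma RLnot: "length x = m+1 \<Longrightarrow> x \<notin> RLam m \<Longrightarrow> (\<not>x!0 \<and> (\<forall>k\<in>{1..m}. x!k)) \<or>
   (x!0 \<and> (\<exists>a\<in>{1..m}. \<exists>b\<in>{1..m}. \<exists>c\<in>{1..m}. a\<noteq>b \<and> a\<noteq>c \<and> b\<noteq>c \<and> \<not>x!a \<and> x!b \<and> x!c))"
proof -
  assume l: "length x = m+1" and n: "x \<notin> RLam m"
  show ?thesis
  proof (cases "x!0")
    case False
    have "\<forall>k\<in>{1..m}. x!k"
    proof
      fix k assume k: "k \<in> {1..m}"
      show "x!k"
      proof (rule ccontr)
        assume "\<not> x!k"
        hence "\<exists>k\<in>{2..m+1}. \<not> x ! (k - 1)" using k by (intro bexI[of _ "k+1"]) auto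
        thus False using n l False unfolding RLam_def by auto
      qed
    qed
    thus ?thesis using False by blast
  next
    case True
    have "\<not> (\<forall>i\<in>{2..m+1}. \<forall>j1\<in>{2..m+1}. \<forall>j2\<in>{2..m+1}.
        i \<noteq> j1 \<and> i \<noteq> j2 \<and> j1 \<noteq> j2 \<longrightarrow>
        x ! (i - 1) \<or> \<not> x ! 0 \<or> \<not> x ! (j1 - 1) \<or> \<not> x ! (j2 - 1))"
      using n l True unfolding RLam_def by auto
    then obtain i j1 j2 where "i\<in>{2..m+1}" "j1\<in>{2..m+1}" "j2\<in>{2..m+1}" "i \<noteq> j1" "i \<noteq> j2" "j1 \<noteq> j2"
      "\<not> x ! (i - 1)" "x ! (j1 - 1)" "x ! (j2 - 1)" by blast
    hence "i-1\<in>{1..m}" "j1-1\<in>{1..m}" "j2-1\<in>{1..m}" "i-1 \<noteq> j1-1" "i-1 \<noteq> j2-1" "j1-1 \<noteq> j2-1"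
      by auto
    thus ?thesis using True \<open>\<not> x ! (i - 1)\<close> \<open>x ! (j1 - 1)\<close> \<open>x ! (j2 - 1)\<close> by blast
  qed
qed

definition uR :: "nat \<Rightarrow> bool list" where "uR n = replicate n True @ replicate n False"
definition vR :: "nat \<Rightarrow> nat \<Rightarrow> bool list" where
  "vR n j = map (\<lambda>c. c = j) [0..<n] @ map (\<lambda>c. c \<noteq> j) [0..<n]"
definition fF :: "nat \<Rightarrow> bool list \<Rightarrow> bool option" where
  "fF n x = (if x = uR n then Some False else if (\<exists>j<n. x = vR n j) then Some True else None)"

lemma len_uR[simp]: "length (uR n) = 2*n" by (simp add: uR_def)
lemma len_vR[simp]: "length (vR n j) = 2*n" by (simp add: vR_def)
lemma uR_nth: "c < 2*n \<Longrightarrow> uR n ! c = (c < n)"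
  by (simp add: uR_def nth_append)
lemma vR_nth: "c < 2*n \<Longrightarrow> vR n j ! c = (if c < n then c = j else c - n \<noteq> j)"
proof -
  assume "c < 2*n"
  hence "\<not> c < n \<Longrightarrow> c - n < n" by arith
  thus ?thesis by (simp add: vR_def nth_append)
qed
lemma vR_ne_uR: "n \<ge> 2 \<Longrightarrow> vR n j \<noteq> uR n"
proof
  assume n: "n \<ge> 2" and e: "vR n j = uR n"
  define j' where "j' = (if j = 0 then 1 else 0::nat)"
  have "j' < n" "j' \<noteq> j" using n by (auto simp: j'_def)
  hence "vR n j ! (n+j') \<noteq> uR n ! (n+j')" by (simp add: vR_nth uR_nth)
  thus False using e by simp
qed

lemma fF_u: "fF n (uR n) = Some False" by (simp add: fF_def)
lemma fF_v: "n \<ge> 2 \<Longrightarrow> j < n \<Longrightarrow> fF n (vR n j) = Some True"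
  using vR_ne_uR[of n j] by (auto simp: fF_def)
lemma dom_fF: "x \<in> dom (fF n) \<Longrightarrow> x = uR n \<or> (\<exists>j<n. x = vR n j)"
  by (auto simp: fF_def split: if_splits)

lemma key:
  assumes n3: "n \<ge> 3" and m3: "m \<ge> 3" and lcs: "length cs = 2*n"
    and cols: "\<forall>c\<in>set cs. c \<in> RLam m"
    and rows: "\<forall>t<m+1. map (\<lambda>c. c!t) cs \<in> dom (fF n)"
    and out: "map (\<lambda>t. the (fF n (map (\<lambda>c. c!t) cs))) [0..<m+1] \<notin> RLam m"
  shows "m = n"
proof -
  define R where "R t = map (\<lambda>c. c!t) cs" for t
  define ov where "ov = map (\<lambda>t. the (fF n (R t))) [0..<m+1]"
  have col: "c < 2*n \<Longrightarrow> cs!c \<in> RLam m" for c using cols lcs by auto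
  have Rd: "t \<le> m \<Longrightarrow> R t = uR n \<or> (\<exists>j<n. R t = vR n j)" for t
    using rows dom_fF unfolding R_def by (metis less_Suc_eq_le Suc_eq_plus1)
  have cR: "c < 2*n \<Longrightarrow> cs!c!t = R t ! c" for c t using lcs by (simp add: R_def)
  have hU: "R t = uR n \<Longrightarrow> c < 2*n \<Longrightarrow> cs!c!t = (c<n)" for t c using cR uR_nth by simp
  have hV: "R t = vR n j \<Longrightarrow> c < 2*n \<Longrightarrow> cs!c!t = (if c<n then c=j else c-n\<noteq>j)" for t c j
    using cR vR_nth by simp
  have lo: "length ov = m+1" by (simp add: ov_def)
  have oU: "t \<le> m \<Longrightarrow> R t = uR n \<Longrightarrow> \<not> ov!t" for t
    by (simp add: ov_def fF_u del: upt_Suc)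
  have oV: "t \<le> m \<Longrightarrow> R t = vR n j \<Longrightarrow> j < n \<Longrightarrow> ov!t" for t j
    using n3 fF_v[of n j] by (simp add: ov_def del: upt_Suc)
  have oU': "t \<le> m \<Longrightarrow> \<not> ov!t \<Longrightarrow> R t = uR n" for t using oV Rd by blast
  have oV': "t \<le> m \<Longrightarrow> ov!t \<Longrightarrow> \<exists>j<n. R t = vR n j" for t using oU Rd by blast
  have ono: "ov \<notin> RLam m" using out by (simp add: ov_def R_def)
  from RLnot[OF lo ono] show ?thesis
  proof
    assume A: "\<not> ov!0 \<and> (\<forall>k\<in>{1..m}. ov!k)"
    hence R0: "R 0 = uR n" using oU' by blast
    define K where "K t = (SOME j. j<n \<and> R t = vR n j)" for t
    have aK: "K k < n \<and> R k = vR n (K k)" if "k\<in>{1..m}" for k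
    proof -
      have "\<exists>j. j<n \<and> R k = vR n j" using A oV' that by auto
      thus ?thesis unfolding K_def by (rule someI_ex)
    qed
    have inj: "inj_on K {1..m}"
    proof (rule inj_onI, rule ccontr)
      fix t2 t3 assume t: "t2 \<in> {1..m}" "t3 \<in> {1..m}" "K t2 = K t3" "t2 \<noteq> t3"
      define c where "c = K t2"
      have c: "c < n" using aK t by (simp add: c_def)
      have colc: "cs!c!t = (K t = c)" if "t\<in>{1..m}" for t
        using hV[of t "K t" c] aK[OF that] c by auto
      have c0: "cs!c!0" using hU[OF R0] c by simp
      have allc: "K t = c" if "t \<in> {1..m}" for t
      proof (cases "t = t2 \<or> t = t3")
        case True thus ?thesis using t c_def by auto
      next
        case False
        have "cs!c!t \<or> \<not> cs!c!t2 \<or> \<not> cs!c!t3"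
          using RL2[OF col c0, of t t2 t3] c that t False by auto
        thus ?thesis using colc that t c_def by auto
      qed
      define c' where "c' = (if c = 0 then 1 else 0::nat)"
      have c': "c' < n" "c' \<noteq> c" using n3 by (auto simp: c'_def)
      have "\<not> cs!(n+c')!0" using hU[OF R0, of "n+c'"] c' by simp
      moreover have "n+c' < 2*n" using c' by simp
      ultimately obtain k where k: "k\<in>{1..m}" "\<not> cs!(n+c')!k" using RL1[OF col[of "n+c'"]] by blast
      have "cs!(n+c')!k" using hV[of k "K k" "n+c'"] aK[OF k(1)] allc[OF k(1)] c' by auto
      thus False using k by simp
    qed
    have surj: "K ` {1..m} = {0..<n}"
    proof
      show "K ` {1..m} \<subseteq> {0..<n}" using aK by auto
    next
      show "{0..<n} \<subseteq> K ` {1..m}"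
      proof
        fix c assume "c \<in> {0..<n}"
        hence c: "c < n" by simp
        have "\<not> cs!(n+c)!0" using hU[OF R0, of "n+c"] c by simp
        moreover have "n+c < 2*n" using c by simp
        ultimately obtain k where k: "k\<in>{1..m}" "\<not> cs!(n+c)!k" using RL1[OF col[of "n+c"]] by blast
        have "cs!(n+c)!k = (c \<noteq> K k)" using hV[of k "K k" "n+c"] aK[OF k(1)] c by auto
        thus "c \<in> K ` {1..m}" using k by auto
      qed
    qed
    have "card {1..m} = card {0..<n}" using card_image[OF inj] surj by simp
    thus ?thesis by simp
  next
    assume B: "ov!0 \<and> (\<exists>a\<in>{1..m}. \<exists>b\<in>{1..m}. \<exists>c\<in>{1..m}. a\<noteq>b \<and> a\<noteq>c \<and> b\<noteq>c \<and> \<not>ov!a \<and> ov!b \<and> ov!c)"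
    then obtain t0 t1 t2 where t: "t0\<in>{1..m}" "t1\<in>{1..m}" "t2\<in>{1..m}" "t0\<noteq>t1" "t0\<noteq>t2" "t1\<noteq>t2"
      "\<not>ov!t0" "ov!t1" "ov!t2" by blast
    obtain i where i: "i<n" "R 0 = vR n i" using oV' B by blast
    have Rt0: "R t0 = uR n" using oU' t by auto
    obtain p where p: "p<n" "R t1 = vR n p" using oV' t by auto
    obtain q where q: "q<n" "R t2 = vR n q" using oV' t by auto
    have ci0: "cs!i!0" using hV[OF i(2), of i] i by simp
    have cn0: "cs!(n+j)!0" if "j<n" "j\<noteq>i" for j using hV[OF i(2), of "n+j"] that by simp
    have cit0: "cs!i!t0" using hU[OF Rt0, of i] i by simp
    have cnt0: "\<not> cs!(n+j)!t0" if "j<n" for j using hU[OF Rt0, of "n+j"] that by simp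
    have noti: "p' \<noteq> i" if h: "s1\<in>{1..m}" "s2\<in>{1..m}" "t0\<noteq>s1" "t0\<noteq>s2" "s1\<noteq>s2"
      "p'<n" "R s1 = vR n p'" "q'<n" "R s2 = vR n q'" for s1 s2 p' q'
    proof
      assume pi: "p' = i"
      have "cs!i!s2 \<or> \<not> cs!i!t0 \<or> \<not> cs!i!s1" using RL2[OF col ci0, of s2 t0 s1] h t i by auto
      hence "q' = i" using hV[OF h(7), of i] hV[OF h(9), of i] cit0 i pi by simp
      define j where "j = (if i = 0 then 1 else 0::nat)"
      have j: "j < n" "j \<noteq> i" using n3 by (auto simp: j_def)
      have "cs!(n+j)!t0 \<or> \<not> cs!(n+j)!s1 \<or> \<not> cs!(n+j)!s2"
        using RL2[OF col cn0[OF j], of t0 s1 s2] h t j by auto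
      thus False using hV[OF h(7), of "n+j"] hV[OF h(9), of "n+j"] cnt0[OF j(1)] j pi \<open>q' = i\<close> by simp
    qed
    have pi: "p \<noteq> i" using noti[OF t(2,3,4,5,6) p q] .
    have qi: "q \<noteq> i" using noti[OF t(3,2,5,4) _ q p] t(6) by auto
    have gj: "j = p \<or> j = q" if "j<n" "j\<noteq>i" for j
    proof -
      have "cs!(n+j)!t0 \<or> \<not> cs!(n+j)!t1 \<or> \<not> cs!(n+j)!t2"
        using RL2[OF col cn0[OF that], of t0 t1 t2] t that by auto
      thus ?thesis using hV[OF p(2), of "n+j"] hV[OF q(2), of "n+j"] cnt0 that by auto
    qed
    have pq: "p \<noteq> q"
    proof
      assume "p = q"
      have "\<exists>j::nat. j < 3 \<and> j \<noteq> i \<and> j \<noteq> p" by presburger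
      thus False using gj n3 \<open>p = q\<close> by fastforce
    qed
    have n3': "n = 3"
    proof (rule ccontr)
      assume "n \<noteq> 3"
      have "\<exists>j::nat. j < 4 \<and> j \<noteq> i \<and> j \<noteq> p \<and> j \<noteq> q" by presburger
      then obtain j::nat where "j < 4" "j \<noteq> i" "j \<noteq> p" "j \<noteq> q" by blast
      moreover have "j < n" using \<open>j < 4\<close> n3 \<open>n \<noteq> 3\<close> by linarith
      ultimately show False using gj by blast
    qed
    have cip: "\<not> cs!i!t1" using hV[OF p(2), of i] i pi by auto
    have sub: "{1..m} \<subseteq> {t0,t1,t2}"
    proof
      fix t assume tm: "t \<in> {1..m}"
      show "t \<in> {t0,t1,t2}"
      proof (rule ccontr)
        assume nt: "t \<notin> {t0,t1,t2}"
        have T: "cs!i!t1 \<or> \<not> cs!i!t0 \<or> \<not> cs!i!t" using RL2[OF col ci0, of t1 t0 t] t tm nt i by auto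
        have "t \<le> m" using tm by simp
        from Rd[OF this] show False
        proof
          assume "R t = uR n"
          thus False using T cip cit0 hU[of t i] i by auto
        next
          assume "\<exists>j<n. R t = vR n j"
          then obtain k where k: "k<n" "R t = vR n k" by blast
          show False
          proof (cases "k = i")
            case True thus False using T cip cit0 hV[OF k(2), of i] i by auto
          next
            case False
            have "cs!(n+p)!t0 \<or> \<not> cs!(n+p)!t \<or> \<not> cs!(n+p)!t2"
              using RL2[OF col cn0[OF p(1) pi], of t0 t t2] t tm nt p by auto
            hence kp: "k = p" using hV[OF k(2), of "n+p"] hV[OF q(2), of "n+p"] cnt0 p pq by auto
            have "cs!(n+q)!t0 \<or> \<not> cs!(n+q)!t \<or> \<not> cs!(n+q)!t1"
              using RL2[OF col cn0[OF q(1) qi], of t0 t t1] t tm nt q by auto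
            hence "k = q" using hV[OF k(2), of "n+q"] hV[OF p(2), of "n+q"] cnt0 q pq by auto
            thus False using kp pq by simp
          qed
        qed
      qed
    qed
    have "card {1..m} \<le> card {t0,t1,t2}" using card_mono[OF _ sub] by simp
    also have "\<dots> \<le> 3" by (simp add: card_insert_if)
    finally have "m \<le> 3" by simp
    thus ?thesis using m3 n3' by simp
  qed
qed

definition FF :: "nat \<Rightarrow> pfun" where "FF n = (2*n, fF n)"

lemma FF_pfun: "is_pfun (FF n)"
  unfolding is_pfun_def FF_def by (auto dest!: dom_fF)

lemma FF_in: assumes "n \<ge> 3" "m \<ge> 3" "m \<noteq> n" shows "FF n \<in> pPolRLam m"
  unfolding pPolRLam_def pPol_def
proof (intro CollectI conjI allI impI)
  show "is_pfun (FF n)" by (rule FF_pfun)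
  fix cs :: "bool list list"
  assume "length cs = fst (FF n)" "\<forall>c\<in>set cs. c \<in> RLam m"
    "\<forall>i<m+1. map (\<lambda>c. c ! i) cs \<in> dom (snd (FF n))"
  thus "map (\<lambda>i. the (snd (FF n) (map (\<lambda>c. c ! i) cs))) [0..<m+1] \<in> RLam m"
    using key[of n m cs] assms by (auto simp: FF_def)
qed

lemma FF_notin: assumes n3: "n \<ge> 3" shows "FF n \<notin> pPolRLam n"
proof
  assume F: "FF n \<in> pPolRLam n"
  define rows where "rows = uR n # map (vR n) [0..<n]"
  define cs where "cs = map (\<lambda>c. map (\<lambda>r. r!c) rows) [0..<2*n]"
  have lr: "length rows = n+1" by (simp add: rows_def)
  have rlen: "r \<in> set rows \<Longrightarrow> length r = 2*n" for r by (auto simp: rows_def)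
  have rowsn: "t \<le> n \<Longrightarrow> rows!t = (if t = 0 then uR n else vR n (t-1))" for t
    by (cases t) (auto simp: rows_def)
  have lcs: "length cs = 2*n" by (simp add: cs_def)
  have csnth: "c < 2*n \<Longrightarrow> t \<le> n \<Longrightarrow> cs!c!t = rows!t!c" for c t
    using lr by (simp add: cs_def)
  have row: "t < n+1 \<Longrightarrow> map (\<lambda>c. c!t) cs = rows!t" for t
  proof -
    assume t: "t < n+1"
    have "length (rows!t) = 2*n" using rlen t lr by auto
    thus ?thesis using t lr by (auto simp: cs_def intro: nth_equalityI)
  qed
  have cols: "\<forall>c\<in>set cs. c \<in> RLam n"
  proof
    fix x assume "x \<in> set cs"
    then obtain c where c: "c < 2*n" "x = cs!c" using lcs by (auto simp: in_set_conv_nth)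
    have lx: "length x = n+1" using c lr by (simp add: cs_def)
    have x0: "x!0 = (c < n)" using c csnth[of c 0] rowsn[of 0] uR_nth by simp
    have xt: "x!t = (if c < n then c = t-1 else c-n \<noteq> t-1)" if t: "t \<in> {1..n}" for t
    proof -
      have "t \<le> n" "t \<noteq> 0" using t by auto
      hence "x!t = vR n (t-1) ! c" using csnth[of c t] rowsn[of t] c by simp
      thus ?thesis using vR_nth[OF c(1)] by simp
    qed
    show "x \<in> RLam n"
    proof (cases "c < n")
      case True
      show ?thesis unfolding RLam_def
      proof (intro CollectI conjI ballI impI)
        show "length x = n+1" by (rule lx)
        show "x ! 0 \<or> (\<exists>k\<in>{2..n + 1}. \<not> x ! (k - 1))" using x0 True by simp
        fix i j1 j2 assume r: "i\<in>{2..n+1}" "j1\<in>{2..n+1}" "j2\<in>{2..n+1}"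
          and d: "i \<noteq> j1 \<and> i \<noteq> j2 \<and> j1 \<noteq> j2"
        have "j1 - 1 \<in> {1..n}" "j2 - 1 \<in> {1..n}" using r by auto
        hence "x!(j1-1) = (c = j1-1-1)" "x!(j2-1) = (c = j2-1-1)" using xt True by auto
        moreover have "j1-1-1 \<noteq> j2-1-1" using r d by auto
        ultimately show "x ! (i - 1) \<or> \<not> x ! 0 \<or> \<not> x ! (j1 - 1) \<or> \<not> x ! (j2 - 1)" by auto
      qed
    next
      case False
      have "c - n + 1 \<in> {1..n}" using c False by auto
      hence "\<not> x ! (c-n+1)" using xt False by simp
      moreover have "c - n + 2 \<in> {2..n+1}" using c False by auto
      ultimately have "\<not> x ! (c-n+2-1)" "c - n + 2 \<in> {2..n+1}" by simp_all
      thus ?thesis unfolding RLam_def using lx x0 False by blast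
    qed
  qed
  have dm: "\<forall>t<n+1. map (\<lambda>c. c ! t) cs \<in> dom (snd (FF n))"
  proof (intro allI impI)
    fix t assume t: "t < n+1"
    show "map (\<lambda>c. c ! t) cs \<in> dom (snd (FF n))"
    proof (cases "t = 0")
      case True thus ?thesis using row[OF t] rowsn[of t] fF_u by (auto simp: FF_def)
    next
      case False thus ?thesis using row[OF t] rowsn[of t] t fF_v[of n "t-1"] n3 by (auto simp: FF_def)
    qed
  qed
  have "map (\<lambda>i. the (snd (FF n) (map (\<lambda>c. c ! i) cs))) [0..<n+1] \<in> RLam n"
    using F lcs cols dm unfolding pPolRLam_def pPol_def by (auto simp: FF_def)
  moreover define ov where "ov = map (\<lambda>i. the (snd (FF n) (map (\<lambda>c. c ! i) cs))) [0..<n+1]"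
  ultimately have ovR: "ov \<in> RLam n" by simp
  have ovt: "ov!t = (t \<noteq> 0)" if "t \<le> n" for t
  proof -
    have "ov!t = the (fF n (rows!t))" using that row[of t] by (simp add: ov_def FF_def del: upt_Suc)
    thus ?thesis using rowsn[OF that] fF_u fF_v[of n "t-1"] n3 that by auto
  qed
  from ovR have "ov ! 0 \<or> (\<exists>k\<in>{2..n+1}. \<not> ov ! (k - 1))" unfolding RLam_def by blast
  thus False using ovt by auto
qed

theorem mainTheorem20:
  fixes X Y :: "nat set"
  assumes "X \<noteq> {}" and "Y \<noteq> {}"
    and "X \<subseteq> {n. n \<ge> 3}" and "Y \<subseteq> {n. n \<ge> 3}"
  shows "(\<Inter>n\<in>X. pPolRLam n) = (\<Inter>m\<in>Y. pPolRLam m) \<longleftrightarrow> X = Y"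
proof
  assume E: "(\<Inter>n\<in>X. pPolRLam n) = (\<Inter>m\<in>Y. pPolRLam m)"
  have sub: "A \<subseteq> B" if "A \<subseteq> {n. n \<ge> 3}" "B \<subseteq> {n. n \<ge> 3}"
     "(\<Inter>n\<in>A. pPolRLam n) = (\<Inter>m\<in>B. pPolRLam m)" for A B
  proof
    fix n assume nA: "n \<in> A"
    show "n \<in> B"
    proof (rule ccontr)
      assume nB: "n \<notin> B"
      have n3: "n \<ge> 3" using nA that by auto
      have "FF n \<in> (\<Inter>m\<in>B. pPolRLam m)"
      proof (rule INT_I)
        fix m assume mB: "m \<in> B"
        have "m \<ge> 3" using mB that(2) by blast
        moreover have "m \<noteq> n" using mB nB by blast
        ultimately show "FF n \<in> pPolRLam m" using FF_in[OF n3] by blast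
      qed
      hence "FF n \<in> pPolRLam n" using that(3) nA by blast
      thus False using FF_notin[OF n3] by simp
    qed
  qed
  show "X = Y" using sub[OF assms(3,4) E] sub[OF assms(4,3) E[symmetric]] by (rule subset_antisym)
qed simp

end
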